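(* Let $(X,d)$ be a metric space with $|X|\ge 2$, $a\in X$, and let $\tilde x$ be a sequence of points of $X$ that is $d$-statistically convergent to $a$. Then for every infinite subsequence $\tilde x'$ of $\tilde x$ with $\limsup_{n\to\infty}\frac{|K_{\tilde x'}(n)|}{n}=0$ there exist a sequence $\tilde y$ of points of $X$ and a subsequence $\tilde y'$ of $\tilde y$ such that: (i) $\tilde y$ and $\tilde x$ are statistically equivalent and $K_{\tilde x'}=K_{\tilde y'}$; (ii) $\tilde y$ is $d$-statistically convergent to $a$; (iii) $\tilde y'$ is not $d$-statistically convergent.
   Context: For a subsequence $\tilde z'=(z_{n(k)})$ of a sequence $(z_n)$ (with $(n(k))$ strictly increasing), $K_{\tilde z'}=\{n(k):k\in\mathbb N\}$ and $K_{\tilde z'}(n)=\{m\in K_{\tilde z'}:m\le n\}$. A sequence $(z_k)$ is $d$-statistically convergent to $a$ if for every $\epsilon>0$, $\lim_{n\to\infty}\frac1n|\{k\le n: d(z_k,a)\ge\epsilon\}|=0$, and $d$-statistically convergent if this holds for some $a\in X$; subsequences are regarded as sequences indexed by $k$. A set $M\subseteq\mathbb N$ is statistical dense if $\lim_{n\to\infty}|\{m\in M:m\le n\}|/n=1$; sequences $(x_n),(y_n)$ are statistically equivalent if $x_n=y_n$ for all $n$ in some statistical dense $M$. *)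

theory Defs
  imports "HOL-Analysis.Analysis" "HOL-Library.Liminf_Limsup"
begin

(* Indices range over nat = {0,1,2,...}; "k \<le> n" counts as in the paper. *)

definition stat_conv_to :: "(nat \<Rightarrow> 'a::metric_space) \<Rightarrow> 'a \<Rightarrow> bool" where
  "stat_conv_to z a \<longleftrightarrow>
     (\<forall>\<epsilon>>0. (\<lambda>n. real (card {k. k \<le> n \<and> dist (z k) a \<ge> \<epsilon>}) / real n) \<longlonglongrightarrow> 0)"

definition stat_convergent :: "(nat \<Rightarrow> 'a::metric_space) \<Rightarrow> bool" where
  "stat_convergent z \<longleftrightarrow> (\<exists>a. stat_conv_to z a)"

(* K_{x'} for the subsequence (x (r k))_k is range r; K_{x'}(n) = {m \<in> range r. m \<le> n} *)
definition K_upto :: "(nat \<Rightarrow> nat) \<Rightarrow> nat \<Rightarrow> nat set" where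
  "K_upto r n = {m \<in> range r. m \<le> n}"

definition stat_dense :: "nat set \<Rightarrow> bool" where
  "stat_dense M \<longleftrightarrow> (\<lambda>n. real (card {m \<in> M. m \<le> n}) / real n) \<longlonglongrightarrow> 1"

definition stat_equiv :: "(nat \<Rightarrow> 'a) \<Rightarrow> (nat \<Rightarrow> 'a) \<Rightarrow> bool" where
  "stat_equiv x y \<longleftrightarrow> (\<exists>M. stat_dense M \<and> (\<forall>n\<in>M. x n = y n))"

end

theory Submission
  imports Defs
begin

lemma card_parity_lb:
  assumes "\<forall>k. k mod 2 = q \<longrightarrow> P k" and "q < 2"
  shows "n div 2 \<le> card {k. k \<le> n \<and> P k}"
proof -
  have "(\<lambda>j. 2*j+q) ` {..<n div 2} \<subseteq> {k. k \<le> n \<and> P k}"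
    using assms by auto
  moreover have "inj_on (\<lambda>j. 2*j+q) {..<n div 2}" by (auto simp: inj_on_def)
  ultimately have "card ((\<lambda>j. 2*j+q) ` {..<n div 2}) \<le> card {k. k \<le> n \<and> P k}"
    by (intro card_mono) auto
  thus ?thesis using \<open>inj_on _ _\<close> by (simp add: card_image)
qed

theorem theorem6:
  fixes x :: "nat \<Rightarrow> 'a::metric_space" and a :: 'a and r :: "nat \<Rightarrow> nat"
  assumes two: "\<exists>b::'a. b \<noteq> a"
    and conv: "stat_conv_to x a"
    and sub: "strict_mono r"
    and dens0: "limsup (\<lambda>n. ereal (real (card (K_upto r n)) / real n)) = 0"
  shows "\<exists>(y :: nat \<Rightarrow> 'a) (s :: nat \<Rightarrow> nat). strict_mono s \<and>
           stat_equiv y x \<and> range r = range s \<and>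
           stat_conv_to y a \<and> \<not> stat_convergent (y \<circ> s)"
proof -
  obtain b where b: "b \<noteq> a" using two by auto
  have injr: "inj r" using sub strict_mono_imp_inj_on by blast
  define y where "y m = (if m \<in> range r then (if even (inv r m) then a else b) else x m)" for m
  have yr: "y (r k) = (if even k then a else b)" for k
    using injr by (simp add: y_def)
  have yx: "m \<notin> range r \<Longrightarrow> y m = x m" for m by (simp add: y_def)
  have finK: "finite (K_upto r n)" for n unfolding K_upto_def by auto
  have Klim: "(\<lambda>n. real (card (K_upto r n)) / real n) \<longlonglongrightarrow> 0"
  proof (rule limsup_le_liminf_real)
    show "limsup (\<lambda>n. ereal (real (card (K_upto r n)) / real n)) \<le> ereal 0"
      using dens0 by simp
    show "ereal 0 \<le> liminf (\<lambda>n. ereal (real (card (K_upto r n)) / real n))"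
      by (intro Liminf_bounded always_eventually) auto
  qed
  have equiv: "stat_equiv y x"
    unfolding stat_equiv_def
  proof (intro exI conjI)
    show "\<forall>n\<in>- range r. y n = x n" using yx by auto
    have eq: "card {m \<in> - range r. m \<le> n} = Suc n - card (K_upto r n)" for n
    proof -
      have "{m \<in> - range r. m \<le> n} = {..n} - K_upto r n" unfolding K_upto_def by auto
      moreover have "K_upto r n \<subseteq> {..n}" unfolding K_upto_def by auto
      ultimately show ?thesis by (simp add: card_Diff_subset finK)
    qed
    have le: "card (K_upto r n) \<le> Suc n" for n
      using card_mono[of "{..n}" "K_upto r n"] unfolding K_upto_def by auto
    have ev: "\<forall>\<^sub>F n in sequentially. real (card {m \<in> - range r. m \<le> n}) / real n =
          (1 + 1 / real n) - real (card (K_upto r n)) / real n"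
      using eventually_gt_at_top[of 0]
    proof eventually_elim
      case (elim n)
      have "real (card {m \<in> - range r. m \<le> n}) = real n + 1 - real (card (K_upto r n))"
        using eq[of n] le[of n] by (simp add: of_nat_diff)
      then have "real (card {m \<in> - range r. m \<le> n}) / real n = (real n + 1 - real (card (K_upto r n))) / real n"
        by simp
      also have "\<dots> = real n / real n + 1 / real n - real (card (K_upto r n)) / real n"
        by (simp only: diff_divide_distrib add_divide_distrib)
      finally show ?case using elim by simp
    qed
    have "(\<lambda>n. (1 + 1 / real n) - real (card (K_upto r n)) / real n) \<longlonglongrightarrow> (1 + 0) - 0"
      by (intro tendsto_intros Klim lim_inverse_n')
    hence "(\<lambda>n. (1 + 1 / real n) - real (card (K_upto r n)) / real n) \<longlonglongrightarrow> 1" by simp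
    thus "stat_dense (- range r)" unfolding stat_dense_def
      by (simp only: tendsto_cong[OF ev])
  qed
  have convy: "stat_conv_to y a"
    unfolding stat_conv_to_def
  proof (intro allI impI)
    fix e :: real assume e: "e > 0"
    have sub1: "{k. k \<le> n \<and> dist (y k) a \<ge> e} \<subseteq> {k. k \<le> n \<and> dist (x k) a \<ge> e} \<union> K_upto r n" for n
      unfolding K_upto_def using yx by auto
    have cle: "card {k. k \<le> n \<and> dist (y k) a \<ge> e} \<le> card {k. k \<le> n \<and> dist (x k) a \<ge> e} + card (K_upto r n)" for n
      by (rule order_trans[OF card_mono[OF _ sub1]]) (auto intro: card_Un_le simp: finK)
    have xl: "(\<lambda>n. real (card {k. k \<le> n \<and> dist (x k) a \<ge> e}) / real n) \<longlonglongrightarrow> 0"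
      using conv e unfolding stat_conv_to_def by auto
    have sl: "(\<lambda>n. real (card {k. k \<le> n \<and> dist (x k) a \<ge> e}) / real n + real (card (K_upto r n)) / real n) \<longlonglongrightarrow> 0"
      using tendsto_add[OF xl Klim] by simp
    have up: "\<forall>\<^sub>F n in sequentially. real (card {k. k \<le> n \<and> dist (y k) a \<ge> e}) / real n
          \<le> real (card {k. k \<le> n \<and> dist (x k) a \<ge> e}) / real n + real (card (K_upto r n)) / real n"
    proof (intro always_eventually allI)
      fix n
      have "real (card {k. k \<le> n \<and> dist (y k) a \<ge> e}) \<le> real (card {k. k \<le> n \<and> dist (x k) a \<ge> e}) + real (card (K_upto r n))"
        using cle[of n] by linarith
      hence "real (card {k. k \<le> n \<and> dist (y k) a \<ge> e}) / real n \<le> (real (card {k. k \<le> n \<and> dist (x k) a \<ge> e}) + real (card (K_upto r n))) / real n"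
        by (rule divide_right_mono) simp
      thus "real (card {k. k \<le> n \<and> dist (y k) a \<ge> e}) / real n
        \<le> real (card {k. k \<le> n \<and> dist (x k) a \<ge> e}) / real n + real (card (K_upto r n)) / real n"
        by (simp only: add_divide_distrib)
    qed
    have lo: "\<forall>\<^sub>F n in sequentially. 0 \<le> real (card {k. k \<le> n \<and> dist (y k) a \<ge> e}) / real n"
      by simp
    show "(\<lambda>n. real (card {k. k \<le> n \<and> dist (y k) a \<ge> e}) / real n) \<longlonglongrightarrow> 0"
      by (rule tendsto_sandwich[OF lo up tendsto_const sl])
  qed
  have nc: "\<not> stat_convergent (y \<circ> r)"
  proof
    assume "stat_convergent (y \<circ> r)"
    then obtain c where c: "stat_conv_to (y \<circ> r) c" unfolding stat_convergent_def by auto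
    define e where "e = dist a b / 2"
    have e: "e > 0" using b by (simp add: e_def)
    have "dist a c \<ge> e \<or> dist b c \<ge> e"
    proof (rule ccontr)
      assume "\<not> ?thesis"
      hence "dist a b < 2*e" using dist_triangle2[of a b c] by auto
      thus False by (simp add: e_def)
    qed
    then obtain q :: nat where q: "q < 2" "\<forall>k. k mod 2 = q \<longrightarrow> dist ((y \<circ> r) k) c \<ge> e"
    proof
      assume "dist a c \<ge> e"
      moreover have "\<forall>k. k mod 2 = 0 \<longrightarrow> (y \<circ> r) k = a" using yr by auto
      ultimately show ?thesis using that[of 0] by auto
    next
      assume "dist b c \<ge> e"
      moreover have "\<forall>k. k mod 2 = 1 \<longrightarrow> (y \<circ> r) k = b" using yr by auto
      ultimately show ?thesis using that[of 1] by auto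
    qed
    have lim: "(\<lambda>n. real (card {k. k \<le> n \<and> dist ((y \<circ> r) k) c \<ge> e}) / real n) \<longlonglongrightarrow> 0"
      using c e unfolding stat_conv_to_def by auto
    then have "\<forall>\<^sub>F n in sequentially. real (card {k. k \<le> n \<and> dist ((y \<circ> r) k) c \<ge> e}) / real n < 1/4"
      by (intro order_tendstoD) auto
    then obtain N where N: "\<And>n. n \<ge> N \<Longrightarrow> real (card {k. k \<le> n \<and> dist ((y \<circ> r) k) c \<ge> e}) / real n < 1/4"
      unfolding eventually_sequentially by auto
    define n where "n = N + 2"
    have "n div 2 \<le> card {k. k \<le> n \<and> dist ((y \<circ> r) k) c \<ge> e}"
      by (rule card_parity_lb[OF q(2) q(1)])
    hence "real (n div 2) \<le> real (card {k. k \<le> n \<and> dist ((y \<circ> r) k) c \<ge> e})" by simp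
    moreover have "real n \<le> 4 * real (n div 2)" unfolding n_def by linarith
    moreover have "real (card {k. k \<le> n \<and> dist ((y \<circ> r) k) c \<ge> e}) < real n / 4"
      using N[of n] unfolding n_def by (simp add: field_simps)
    ultimately show False by linarith
  qed
  show ?thesis using sub equiv convy nc by blast
qed

end
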